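(* Let $\phi(w)=aw+ib$ with $a>0$ and $b\in\mathbb{R}$. Then $C_\phi$ is an invertible operator on $H^2(\mathbb{C}_{+})$, and the following are equivalent: (1) $C_{\phi}$ is expansive on $H^2(\mathbb{C}_{+})$; (2) $C_{\phi}$ is uniformly expansive on $H^2(\mathbb{C}_{+})$; (3) $\phi$ is of hyperbolic type, i.e. $a\neq 1$.
   Context: $\mathbb{C}_{+}=\{w\in\mathbb{C}:\mathrm{Re}(w)>0\}$. $H^2(\mathbb{C}_{+})$ is the Hardy space of holomorphic $f$ on $\mathbb{C}_{+}$ with finite norm $\|f\|_2^2=\sup_{0<x<\infty}\frac{1}{\pi}\int_{-\infty}^{\infty}|f(x+iy)|^2\,dy$, and $C_\phi f=f\circ\phi$. For an invertible operator $T$ on a Banach space $X$ with unit sphere $S_X$: $T$ is expansive if for every $z\in S_X$ there is $n\in\mathbb{Z}$ with $\|T^nz\|\ge2$; $T$ is uniformly expansive if there exists $n\in\mathbb{N}$ such that for every $z\in S_X$, $\|T^nz\|\ge 2$ or $\|T^{-n}z\|\ge2$. *)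

theory Defs
  imports "HOL-Analysis.Analysis"
begin

definition RHP :: "complex set" where
  "RHP = {w. 0 < Re w}"

definition H2_norm_sq :: "(complex \<Rightarrow> complex) \<Rightarrow> ennreal" where
  "H2_norm_sq f = (SUP x\<in>{0<..}. ennreal (1/pi) *
       (\<integral>\<^sup>+ y. ennreal ((cmod (f (Complex x y)))\<^sup>2) \<partial>lborel))"

definition H2_norm :: "(complex \<Rightarrow> complex) \<Rightarrow> real" where
  "H2_norm f = sqrt (enn2real (H2_norm_sq f))"

text \<open>Elements of H^2 are represented canonically: holomorphic on the half plane,
  finite norm, and extended by 0 off the half plane.\<close>
definition H2 :: "(complex \<Rightarrow> complex) set" where
  "H2 = {f. f holomorphic_on RHP \<and> H2_norm_sq f < \<infinity> \<and> (\<forall>w. w \<notin> RHP \<longrightarrow> f w = 0)}"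

definition comp_op :: "(complex \<Rightarrow> complex) \<Rightarrow> (complex \<Rightarrow> complex) \<Rightarrow> (complex \<Rightarrow> complex)" where
  "comp_op \<phi> f = (\<lambda>w. if w \<in> RHP then f (\<phi> w) else 0)"

definition bounded_op_H2 :: "((complex \<Rightarrow> complex) \<Rightarrow> (complex \<Rightarrow> complex)) \<Rightarrow> bool" where
  "bounded_op_H2 S \<longleftrightarrow> (\<forall>f\<in>H2. S f \<in> H2) \<and> (\<exists>K. \<forall>f\<in>H2. H2_norm (S f) \<le> K * H2_norm f)"

definition inverse_op_H2 :: "((complex \<Rightarrow> complex) \<Rightarrow> (complex \<Rightarrow> complex)) \<Rightarrow> ((complex \<Rightarrow> complex) \<Rightarrow> (complex \<Rightarrow> complex)) \<Rightarrow> bool" where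
  "inverse_op_H2 S T \<longleftrightarrow> bounded_op_H2 T \<and> (\<forall>f\<in>H2. T (S f) = f \<and> S (T f) = f)"

definition invertible_op_H2 :: "((complex \<Rightarrow> complex) \<Rightarrow> (complex \<Rightarrow> complex)) \<Rightarrow> bool" where
  "invertible_op_H2 S \<longleftrightarrow> bounded_op_H2 S \<and> (\<exists>T. inverse_op_H2 S T)"

definition int_pow_op where
  "int_pow_op S T (n::int) = (if 0 \<le> n then S ^^ nat n else T ^^ nat (- n))"

definition expansive_H2 where
  "expansive_H2 S T \<longleftrightarrow> (\<forall>f\<in>H2. H2_norm f = 1 \<longrightarrow> (\<exists>n::int. H2_norm (int_pow_op S T n f) \<ge> 2))"

definition unif_expansive_H2 where
  "unif_expansive_H2 S T \<longleftrightarrow> (\<exists>n::nat. \<forall>f\<in>H2. H2_norm f = 1 \<longrightarrow>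
       H2_norm ((S ^^ n) f) \<ge> 2 \<or> H2_norm ((T ^^ n) f) \<ge> 2)"

end

theory Submission
  imports Defs "HOL-Probability.Sinc_Integral"
begin

lemma H2_line_meas:
  assumes "f \<in> H2" "x > 0"
  shows "(\<lambda>y. ennreal ((cmod (f (Complex x y)))\<^sup>2)) \<in> borel_measurable borel"
proof -
  have hol: "f holomorphic_on RHP" using assms by (simp add: H2_def)
  have "continuous_on RHP f" using hol holomorphic_on_imp_continuous_on by blast
  moreover have "continuous_on UNIV (\<lambda>y. Complex x y)"
    by (intro continuous_intros)
  moreover have "(\<lambda>y. Complex x y) ` UNIV \<subseteq> RHP" using assms by (auto simp: RHP_def)
  ultimately have "continuous_on UNIV (\<lambda>y. f (Complex x y))"
    using continuous_on_compose2 by blast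
  then have "continuous_on UNIV (\<lambda>y. (cmod (f (Complex x y)))\<^sup>2)"
    by (intro continuous_intros)
  then have "(\<lambda>y. (cmod (f (Complex x y)))\<^sup>2) \<in> borel_measurable borel"
    by (rule borel_measurable_continuous_onI)
  then show ?thesis by measurable
qed

lemma comp_affine:
  fixes a b :: real
  assumes a: "a > 0" and f: "f \<in> H2"
  shows "comp_op (\<lambda>w. complex_of_real a * w + \<i> * complex_of_real b) f \<in> H2 \<and>
    H2_norm_sq (comp_op (\<lambda>w. complex_of_real a * w + \<i> * complex_of_real b) f) = ennreal (1/a) * H2_norm_sq f"
proof -
  define \<phi> where "\<phi> = (\<lambda>w. complex_of_real a * w + \<i> * complex_of_real b)"
  have phiC: "\<phi> (Complex x y) = Complex (a*x) (b + a*y)" for x y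
    by (simp add: \<phi>_def complex_eq_iff)
  have phiR: "\<phi> ` RHP \<subseteq> RHP" using a by (auto simp: \<phi>_def RHP_def)
  have hol: "f holomorphic_on RHP" using f by (simp add: H2_def)
  have fin: "H2_norm_sq f < \<infinity>" using f by (simp add: H2_def)
  have line: "(\<integral>\<^sup>+ y. ennreal ((cmod (comp_op \<phi> f (Complex x y)))\<^sup>2) \<partial>lborel)
      = ennreal (1/a) * (\<integral>\<^sup>+ y. ennreal ((cmod (f (Complex (a*x) y)))\<^sup>2) \<partial>lborel)"
    if x: "x > 0" for x
  proof -
    have ax: "a * x > 0" using a x by simp
    have "(\<integral>\<^sup>+ y. ennreal ((cmod (f (Complex (a*x) y)))\<^sup>2) \<partial>lborel)
        = ennreal \<bar>a\<bar> * (\<integral>\<^sup>+ y. ennreal ((cmod (f (Complex (a*x) (b + a*y))))\<^sup>2) \<partial>lborel)"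
      using nn_integral_real_affine[OF H2_line_meas[OF f ax], of a b] a by simp
    then have "ennreal (1/a) * (\<integral>\<^sup>+ y. ennreal ((cmod (f (Complex (a*x) y)))\<^sup>2) \<partial>lborel)
        = (ennreal (1/a) * ennreal a) * (\<integral>\<^sup>+ y. ennreal ((cmod (f (Complex (a*x) (b + a*y))))\<^sup>2) \<partial>lborel)"
      using a by (simp add: mult.assoc)
    also have "ennreal (1/a) * ennreal a = 1"
      using a by (simp add: ennreal_mult[symmetric])
    finally have "ennreal (1/a) * (\<integral>\<^sup>+ y. ennreal ((cmod (f (Complex (a*x) y)))\<^sup>2) \<partial>lborel)
        = (\<integral>\<^sup>+ y. ennreal ((cmod (f (Complex (a*x) (b + a*y))))\<^sup>2) \<partial>lborel)" by simp
    moreover have "Complex x y \<in> RHP" for y using x by (simp add: RHP_def)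
    ultimately show ?thesis by (simp add: comp_op_def phiC)
  qed
  have "H2_norm_sq (comp_op \<phi> f) = (SUP x\<in>{0<..}. ennreal (1/pi) *
       (ennreal (1/a) * (\<integral>\<^sup>+ y. ennreal ((cmod (f (Complex (a*x) y)))\<^sup>2) \<partial>lborel)))"
    unfolding H2_norm_sq_def by (intro SUP_cong refl) (simp add: line)
  also have "\<dots> = ennreal (1/a) * (SUP x\<in>{0<..}. ennreal (1/pi) *
       (\<integral>\<^sup>+ y. ennreal ((cmod (f (Complex (a*x) y)))\<^sup>2) \<partial>lborel))"
    by (simp add: SUP_mult_left_ennreal mult.left_commute)
  also have "(SUP x\<in>{0<..}. ennreal (1/pi) *
       (\<integral>\<^sup>+ y. ennreal ((cmod (f (Complex (a*x) y)))\<^sup>2) \<partial>lborel))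
     = (SUP z\<in>(\<lambda>x. a*x) ` {0<..}. ennreal (1/pi) *
       (\<integral>\<^sup>+ y. ennreal ((cmod (f (Complex z y)))\<^sup>2) \<partial>lborel))"
    by (simp add: image_comp)
  also have "(\<lambda>x. a*x) ` {0<..} = {0<..}"
  proof (intro equalityI subsetI)
    fix z :: real assume "z \<in> {0<..}"
    then have "z = a * (z/a)" "z/a \<in> {0<..}" using a by auto
    then show "z \<in> (\<lambda>x. a*x) ` {0<..}" by blast
  qed (use a in auto)
  finally have eq: "H2_norm_sq (comp_op \<phi> f) = ennreal (1/a) * H2_norm_sq f"
    unfolding H2_norm_sq_def .
  have "(f \<circ> \<phi>) holomorphic_on RHP"
    by (intro holomorphic_on_compose holomorphic_on_subset[OF hol phiR])
      (auto simp: \<phi>_def intro!: holomorphic_intros)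
  then have "comp_op \<phi> f holomorphic_on RHP"
    by (rule holomorphic_transform) (simp add: comp_op_def)
  moreover have "H2_norm_sq (comp_op \<phi> f) < \<infinity>"
    using fin by (simp add: eq ennreal_mult_less_top)
  moreover have "\<forall>w. w \<notin> RHP \<longrightarrow> comp_op \<phi> f w = 0" by (simp add: comp_op_def)
  ultimately show ?thesis using eq by (simp add: H2_def \<phi>_def)
qed

lemma comp_affine_norm:
  fixes a b :: real
  assumes a: "a > 0" and f: "f \<in> H2"
  shows "H2_norm (comp_op (\<lambda>w. complex_of_real a * w + \<i> * complex_of_real b) f) = H2_norm f / sqrt a"
proof -
  have "H2_norm_sq f < \<infinity>" using f by (simp add: H2_def)
  then show ?thesis
    using comp_affine[OF a f, of b] a
    by (simp add: H2_norm_def enn2real_mult real_sqrt_mult real_sqrt_divide)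
qed

lemma inv_formula:
  fixes a b :: real
  assumes a: "a > 0"
  shows "inverse_op_H2 (comp_op (\<lambda>w. complex_of_real a * w + \<i> * complex_of_real b))
          (comp_op (\<lambda>w. complex_of_real (1/a) * w + \<i> * complex_of_real (-b/a)))"
proof -
  define \<phi> where "\<phi> = (\<lambda>w. complex_of_real a * w + \<i> * complex_of_real b)"
  define \<psi> where "\<psi> = (\<lambda>w. complex_of_real (1/a) * w + \<i> * complex_of_real (-b/a))"
  have a1: "1/a > 0" using a by simp
  have pp: "\<phi> (\<psi> w) = w" "\<psi> (\<phi> w) = w" for w
    using a by (simp_all add: \<phi>_def \<psi>_def complex_eq_iff field_simps)
  have pR: "\<phi> w \<in> RHP" "\<psi> w \<in> RHP" if "w \<in> RHP" for w
    using that a by (auto simp: \<phi>_def \<psi>_def RHP_def)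
  have bd: "bounded_op_H2 (comp_op \<psi>)"
    unfolding bounded_op_H2_def
  proof (intro conjI ballI exI)
    fix f assume f: "f \<in> H2"
    show "comp_op \<psi> f \<in> H2" using comp_affine[OF a1 f, of "-b/a"] unfolding \<psi>_def by blast
    show "H2_norm (comp_op \<psi> f) \<le> sqrt a * H2_norm f"
      using comp_affine_norm[OF a1 f, of "-b/a"] a by (simp add: \<psi>_def real_sqrt_divide)
  qed
  have "comp_op \<psi> (comp_op \<phi> f) = f \<and> comp_op \<phi> (comp_op \<psi> f) = f" if f: "f \<in> H2" for f
    using f pR pp by (auto simp: comp_op_def H2_def fun_eq_iff)
  then show ?thesis using bd unfolding inverse_op_H2_def \<phi>_def \<psi>_def by blast
qed

lemma scale_H2:
  fixes c :: real
  assumes f: "f \<in> H2"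
  shows "(\<lambda>w. complex_of_real c * f w) \<in> H2 \<and>
         H2_norm_sq (\<lambda>w. complex_of_real c * f w) = ennreal (c\<^sup>2) * H2_norm_sq f"
proof -
  have hol: "f holomorphic_on RHP" and fin: "H2_norm_sq f < \<infinity>" and z: "\<forall>w. w \<notin> RHP \<longrightarrow> f w = 0"
    using f by (auto simp: H2_def)
  have line: "(\<integral>\<^sup>+ y. ennreal ((cmod (complex_of_real c * f (Complex x y)))\<^sup>2) \<partial>lborel)
     = ennreal (c\<^sup>2) * (\<integral>\<^sup>+ y. ennreal ((cmod (f (Complex x y)))\<^sup>2) \<partial>lborel)" if x: "x > 0" for x
  proof -
    have "(\<integral>\<^sup>+ y. ennreal ((cmod (complex_of_real c * f (Complex x y)))\<^sup>2) \<partial>lborel)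
       = (\<integral>\<^sup>+ y. ennreal (c\<^sup>2) * ennreal ((cmod (f (Complex x y)))\<^sup>2) \<partial>lborel)"
      by (intro nn_integral_cong) (simp add: norm_mult power_mult_distrib ennreal_mult)
    also have "\<dots> = ennreal (c\<^sup>2) * (\<integral>\<^sup>+ y. ennreal ((cmod (f (Complex x y)))\<^sup>2) \<partial>lborel)"
      using H2_line_meas[OF f x] by (simp add: nn_integral_cmult)
    finally show ?thesis .
  qed
  have eq: "H2_norm_sq (\<lambda>w. complex_of_real c * f w) = ennreal (c\<^sup>2) * H2_norm_sq f"
  proof -
    have "H2_norm_sq (\<lambda>w. complex_of_real c * f w) = (SUP x\<in>{0<..}. ennreal (1/pi) *
       (ennreal (c\<^sup>2) * (\<integral>\<^sup>+ y. ennreal ((cmod (f (Complex x y)))\<^sup>2) \<partial>lborel)))"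
      unfolding H2_norm_sq_def by (intro SUP_cong refl) (simp add: line)
    also have "\<dots> = ennreal (c\<^sup>2) * H2_norm_sq f"
      unfolding H2_norm_sq_def by (simp add: SUP_mult_left_ennreal mult.left_commute)
    finally show ?thesis .
  qed
  show ?thesis
    using eq fin z hol
    by (auto simp: H2_def ennreal_mult_less_top intro!: holomorphic_intros)
qed

lemma unit_exists: "\<exists>f\<in>H2. H2_norm f = 1"
proof -
  define g where "g = (\<lambda>w::complex. if 0 < Re w then 1 / (w + 1) else 0)"
  have gC: "(cmod (g (Complex x y)))\<^sup>2 = 1 / ((x+1)\<^sup>2 + y\<^sup>2)" if "x > 0" for x y
  proof -
    have "Complex x y + 1 = Complex (x+1) y" by (simp add: complex_eq_iff)
    then show ?thesis using that
      by (simp add: g_def norm_divide cmod_power2 power_divide)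
  qed
  have hol: "g holomorphic_on RHP"
  proof (rule holomorphic_transform[of "\<lambda>w. 1 / (w + 1)"])
    show "(\<lambda>w. 1 / (w + 1)) holomorphic_on RHP"
    proof (intro holomorphic_intros)
      fix w assume "w \<in> RHP"
      then show "w + 1 \<noteq> 0" by (auto simp: RHP_def complex_eq_iff)
    qed
  qed (auto simp: g_def RHP_def)
  have integ: "integrable lborel (\<lambda>x::real. inverse (1 + x^2))"
    using integrable_inverse_1_plus_square by (simp add: set_integrable_def)
  then have C: "(\<integral>\<^sup>+ y. ennreal (inverse (1 + y^2)) \<partial>lborel) < \<infinity>"
    by (simp add: integrable_iff_bounded)
  have up: "H2_norm_sq g \<le> ennreal (1/pi) * (\<integral>\<^sup>+ y. ennreal (inverse (1 + y^2)) \<partial>lborel)"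
    unfolding H2_norm_sq_def
  proof (rule SUP_least)
    fix x :: real assume "x \<in> {0<..}"
    then have x: "x > 0" by simp
    have "(\<integral>\<^sup>+ y. ennreal ((cmod (g (Complex x y)))\<^sup>2) \<partial>lborel) \<le>
          (\<integral>\<^sup>+ y. ennreal (inverse (1 + y^2)) \<partial>lborel)"
    proof (rule nn_integral_mono)
      fix y :: real
      have "1 \<le> (x+1)^2" using x by (intro one_le_power) simp
      then have "1 + y^2 \<le> (x+1)\<^sup>2 + y\<^sup>2" by simp
      then have "1 / ((x+1)\<^sup>2 + y\<^sup>2) \<le> 1 / (1 + y^2)"
      proof (rule divide_left_mono)
        have "0 < (x+1)\<^sup>2 + y\<^sup>2" using \<open>1 \<le> (x+1)^2\<close>
          by (metis add_pos_nonneg zero_le_power2 zero_less_one order_less_le_trans)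
        moreover have "0 < 1 + y\<^sup>2" by (simp add: add_pos_nonneg)
        ultimately show "0 < ((x+1)\<^sup>2 + y\<^sup>2) * (1 + y\<^sup>2)" by simp
      qed (use \<open>1 + y^2 \<le> (x+1)\<^sup>2 + y\<^sup>2\<close> in auto)
      then have "1 / ((x+1)\<^sup>2 + y\<^sup>2) \<le> inverse (1 + y^2)"
        by (simp add: inverse_eq_divide)
      then show "ennreal ((cmod (g (Complex x y)))\<^sup>2) \<le> ennreal (inverse (1 + y^2))"
        using gC[OF x] by (simp add: ennreal_leI)
    qed
    then show "ennreal (1/pi) * (\<integral>\<^sup>+ y. ennreal ((cmod (g (Complex x y)))\<^sup>2) \<partial>lborel) \<le>
          ennreal (1/pi) * (\<integral>\<^sup>+ y. ennreal (inverse (1 + y^2)) \<partial>lborel)"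
      by (rule mult_left_mono) simp
  qed
  have fin: "H2_norm_sq g < \<infinity>"
  proof -
    have "ennreal (1/pi) * (\<integral>\<^sup>+ y. ennreal (inverse (1 + y^2)) \<partial>lborel) < \<infinity>"
      using C by (simp add: ennreal_mult_less_top)
    then show ?thesis using up by (rule le_less_trans[rotated])
  qed
  have lo1: "ennreal (1/5) * indicator {0..1} y \<le> ennreal ((cmod (g (Complex 1 y)))\<^sup>2)" for y :: real
  proof (cases "y \<in> {0..1}")
    case True
    then have "y\<^sup>2 \<le> 1" by (simp add: abs_square_le_1)
    then have "1/5 \<le> 1 / ((1+1)\<^sup>2 + y\<^sup>2)" by (simp add: divide_simps add_pos_nonneg)
    then show ?thesis using True gC[of 1 y] by (simp add: ennreal_leI)
  qed simp
  have "ennreal (1/5) * emeasure lborel {0..(1::real)} \<le>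
        (\<integral>\<^sup>+ y. ennreal ((cmod (g (Complex 1 y)))\<^sup>2) \<partial>lborel)"
  proof -
    have "ennreal (1/5) * emeasure lborel {0..(1::real)} = (\<integral>\<^sup>+ y. ennreal (1/5) * indicator {0..(1::real)} y \<partial>lborel)"
      by (simp add: nn_integral_cmult_indicator)
    also have "\<dots> \<le> (\<integral>\<^sup>+ y. ennreal ((cmod (g (Complex 1 y)))\<^sup>2) \<partial>lborel)"
      by (rule nn_integral_mono) (rule lo1)
    finally show ?thesis .
  qed
  then have lo2: "ennreal (1/5) \<le> (\<integral>\<^sup>+ y. ennreal ((cmod (g (Complex 1 y)))\<^sup>2) \<partial>lborel)" by simp
  have "ennreal (1/pi) * ennreal (1/5) \<le> H2_norm_sq g"
  proof -
    have "ennreal (1/pi) * ennreal (1/5) \<le> ennreal (1/pi) * (\<integral>\<^sup>+ y. ennreal ((cmod (g (Complex 1 y)))\<^sup>2) \<partial>lborel)"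
      using lo2 by (rule mult_left_mono) simp
    also have "\<dots> \<le> H2_norm_sq g"
      unfolding H2_norm_sq_def by (rule SUP_upper) simp
    finally show ?thesis .
  qed
  moreover have "0 < ennreal (1/pi) * ennreal (1/5)"
    by (simp add: ennreal_mult[symmetric])
  ultimately have pos: "0 < H2_norm_sq g" by (rule less_le_trans[rotated])
  have gH: "g \<in> H2" using hol fin by (auto simp: H2_def g_def RHP_def)
  have npos: "H2_norm g > 0"
    using pos fin by (simp add: H2_norm_def enn2real_positive_iff)
  define c where "c = 1 / H2_norm g"
  have sc: "(\<lambda>w. complex_of_real c * g w) \<in> H2 \<and>
         H2_norm_sq (\<lambda>w. complex_of_real c * g w) = ennreal (c\<^sup>2) * H2_norm_sq g"
    by (rule scale_H2[OF gH])
  have "H2_norm (\<lambda>w. complex_of_real c * g w) = \<bar>c\<bar> * H2_norm g"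
    using sc fin by (simp add: H2_norm_def enn2real_mult real_sqrt_mult)
  also have "\<dots> = 1" using npos by (simp add: c_def)
  finally show ?thesis using sc by blast
qed

lemma iter_S:
  fixes a b :: real
  assumes a: "a > 0" and f: "f \<in> H2"
  shows "((comp_op (\<lambda>w. complex_of_real a * w + \<i> * complex_of_real b)) ^^ n) f \<in> H2 \<and>
         H2_norm (((comp_op (\<lambda>w. complex_of_real a * w + \<i> * complex_of_real b)) ^^ n) f) = H2_norm f / sqrt a ^ n"
proof (induction n)
  case 0 then show ?case using f by simp
next
  case (Suc n)
  then show ?case using comp_affine[OF a] comp_affine_norm[OF a] by simp
qed

lemma iter_T:
  assumes a: "a > 0" and inv: "inverse_op_H2 S T" and f: "f \<in> H2"
    and Sn: "\<And>g. g \<in> H2 \<Longrightarrow> H2_norm (S g) = H2_norm g / sqrt a"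
  shows "(T ^^ n) f \<in> H2 \<and> H2_norm ((T ^^ n) f) = sqrt a ^ n * H2_norm f"
  using f
proof (induction n arbitrary: f)
  case 0 then show ?case by simp
next
  case (Suc n)
  have TH: "T g \<in> H2" if "g \<in> H2" for g using inv that by (auto simp: inverse_op_H2_def bounded_op_H2_def)
  have Tn: "H2_norm (T g) = sqrt a * H2_norm g" if g: "g \<in> H2" for g
  proof -
    have "S (T g) = g" using inv g by (auto simp: inverse_op_H2_def)
    then have "H2_norm g = H2_norm (T g) / sqrt a" using Sn[OF TH[OF g]] by simp
    then show ?thesis using a by (simp add: field_simps)
  qed
  show ?case using Suc TH Tn by simp
qed

theorem theorem3p6:
  fixes a b :: real
  assumes "a > 0"
  defines "\<phi> \<equiv> (\<lambda>w. complex_of_real a * w + \<i> * complex_of_real b)"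
  shows "invertible_op_H2 (comp_op \<phi>) \<and>
    (\<forall>T. inverse_op_H2 (comp_op \<phi>) T \<longrightarrow>
       ((expansive_H2 (comp_op \<phi>) T \<longleftrightarrow> unif_expansive_H2 (comp_op \<phi>) T) \<and>
        (unif_expansive_H2 (comp_op \<phi>) T \<longleftrightarrow> a \<noteq> 1)))"
proof -
  note a = \<open>a > 0\<close>
  define S where "S = comp_op \<phi>"
  have SH: "S f \<in> H2" if "f \<in> H2" for f using comp_affine[OF a that] by (simp add: S_def \<phi>_def)
  have Sn: "H2_norm (S f) = H2_norm f / sqrt a" if "f \<in> H2" for f
    using comp_affine_norm[OF a that] by (simp add: S_def \<phi>_def)
  have Sk: "(S ^^ n) f \<in> H2 \<and> H2_norm ((S ^^ n) f) = H2_norm f / sqrt a ^ n" if "f \<in> H2" for f n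
    using iter_S[OF a that] by (simp add: S_def \<phi>_def)
  have bd: "bounded_op_H2 S"
    unfolding bounded_op_H2_def
  proof (intro conjI ballI exI)
    fix f assume f: "f \<in> H2"
    show "S f \<in> H2" using SH[OF f] .
    show "H2_norm (S f) \<le> (1 / sqrt a) * H2_norm f" using Sn[OF f] by simp
  qed
  have inv1: "invertible_op_H2 S"
    using bd inv_formula[OF a, of b] by (auto simp: invertible_op_H2_def S_def \<phi>_def)
  have main: "(expansive_H2 S T \<longleftrightarrow> unif_expansive_H2 S T) \<and> (unif_expansive_H2 S T \<longleftrightarrow> a \<noteq> 1)"
    if inv: "inverse_op_H2 S T" for T
  proof -
    have Tk: "(T ^^ n) f \<in> H2 \<and> H2_norm ((T ^^ n) f) = sqrt a ^ n * H2_norm f" if "f \<in> H2" for f n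
      using iter_T[OF a inv that Sn] by blast
    have U2E: "expansive_H2 S T" if u: "unif_expansive_H2 S T"
    proof -
      obtain n where n: "\<forall>f\<in>H2. H2_norm f = 1 \<longrightarrow> H2_norm ((S ^^ n) f) \<ge> 2 \<or> H2_norm ((T ^^ n) f) \<ge> 2"
        using u by (auto simp: unif_expansive_H2_def)
      have p1: "int_pow_op S T (int n) = S ^^ n" by (simp add: int_pow_op_def)
      have p2: "H2_norm (int_pow_op S T (- int n) f) = H2_norm ((T ^^ n) f)" for f
        by (cases "n = 0") (simp_all add: int_pow_op_def)
      show ?thesis unfolding expansive_H2_def
      proof (intro ballI impI)
        fix f assume "f \<in> H2" "H2_norm f = 1"
        then have "H2_norm ((S ^^ n) f) \<ge> 2 \<or> H2_norm ((T ^^ n) f) \<ge> 2" using n by blast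
        then show "\<exists>k::int. H2_norm (int_pow_op S T k f) \<ge> 2"
        proof
          assume "H2_norm ((S ^^ n) f) \<ge> 2" then show ?thesis using p1 by metis
        next
          assume "H2_norm ((T ^^ n) f) \<ge> 2" then show ?thesis using p2 by metis
        qed
      qed
    qed
    show ?thesis
    proof (cases "a = 1")
      case True
      obtain f0 where f0: "f0 \<in> H2" "H2_norm f0 = 1" using unit_exists by blast
      have nU: "\<not> unif_expansive_H2 S T"
        using f0 Sk[OF f0(1)] Tk[OF f0(1)] True by (auto simp: unif_expansive_H2_def)
      have "H2_norm (int_pow_op S T k f0) = 1" for k
        using f0 Sk[OF f0(1)] Tk[OF f0(1)] True by (simp add: int_pow_op_def)
      then have nE: "\<not> expansive_H2 S T"
        using f0 by (auto simp: expansive_H2_def)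
      show ?thesis using nU nE True by blast
    next
      case False
      have U: "unif_expansive_H2 S T"
      proof (cases "a < 1")
        case True
        have "sqrt a < 1" using a True by simp
        moreover have "0 < sqrt a" using a by simp
        ultimately have "1 < 1 / sqrt a" by (simp add: field_simps)
        then obtain n where n: "2 < (1 / sqrt a) ^ n" using real_arch_pow by blast
        show ?thesis unfolding unif_expansive_H2_def
        proof (intro exI ballI impI disjI1)
          fix f assume "f \<in> H2" "H2_norm f = 1"
          then show "H2_norm ((S ^^ n) f) \<ge> 2" using Sk n by (simp add: power_one_over)
        qed
      next
        case False
        then have "1 < sqrt a" using \<open>a \<noteq> 1\<close> by simp
        then obtain n where n: "2 < sqrt a ^ n" using real_arch_pow by blast
        show ?thesis unfolding unif_expansive_H2_def
        proof (intro exI ballI impI disjI2)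
          fix f assume "f \<in> H2" "H2_norm f = 1"
          then show "H2_norm ((T ^^ n) f) \<ge> 2" using Tk n by simp
        qed
      qed
      show ?thesis using U U2E False by blast
    qed
  qed
  show ?thesis using inv1 main unfolding S_def by blast
qed

end
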